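(* Let $H$ be a reduced valuation monoid with quotient group $G=\mathsf{q}(H)$, and let $X$ be a finite subset of $G$ containing the identity $1$. Then there exists a unique $a\in G$ such that $aX=\{ax: x\in X\}$ is a finite subset of $H$ containing $1$.
   Context: All monoids are written multiplicatively. A commutative monoid $H$ is cancellative if $ac=bc$ implies $a=b$ for all $a,b,c\in H$. For a commutative cancellative monoid $H$, $\mathsf{q}(H)$ denotes its quotient (Grothendieck) group, with $H\subseteq \mathsf{q}(H)$ and $\mathsf{q}(H)=\{ab^{-1}: a,b\in H\}$. A commutative cancellative monoid $H$ is a valuation monoid if for every $x\in\mathsf{q}(H)$ we have $x\in H$ or $x^{-1}\in H$; it is reduced if its only invertible element is the identity $1$. *)

theory Defs
  imports "HOL-Algebra.Group"
begin

text \<open>A commutative cancellative monoid H is modelled, via its embedding into its quotient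
group, as a submonoid H of a commutative group G such that every element of G is a
quotient a b^-1 with a, b in H; then G is (isomorphic to) the quotient group q(H).\<close>

definition submonoid_quotient_group :: "('a, 'b) monoid_scheme \<Rightarrow> 'a set \<Rightarrow> bool" where
  "submonoid_quotient_group G H \<longleftrightarrow>
     comm_group G \<and> H \<subseteq> carrier G \<and> \<one>\<^bsub>G\<^esub> \<in> H \<and>
     (\<forall>a\<in>H. \<forall>b\<in>H. a \<otimes>\<^bsub>G\<^esub> b \<in> H) \<and>
     carrier G = {a \<otimes>\<^bsub>G\<^esub> inv\<^bsub>G\<^esub> b | a b. a \<in> H \<and> b \<in> H}"

definition is_valuation_monoid :: "('a, 'b) monoid_scheme \<Rightarrow> 'a set \<Rightarrow> bool" where
  "is_valuation_monoid G H \<longleftrightarrow>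
     (\<forall>x\<in>carrier G. x \<in> H \<or> inv\<^bsub>G\<^esub> x \<in> H)"

definition is_reduced :: "('a, 'b) monoid_scheme \<Rightarrow> 'a set \<Rightarrow> bool" where
  "is_reduced G H \<longleftrightarrow> (\<forall>u\<in>H. (\<exists>v\<in>H. u \<otimes>\<^bsub>G\<^esub> v = \<one>\<^bsub>G\<^esub>) \<longrightarrow> u = \<one>\<^bsub>G\<^esub>)"

end

theory Submission
  imports Defs
begin

lemma min_exists:
  assumes cg: "comm_group G" and HG: "H \<subseteq> carrier G" and one: "\<one>\<^bsub>G\<^esub> \<in> H"
    and cl: "\<forall>a\<in>H. \<forall>b\<in>H. a \<otimes>\<^bsub>G\<^esub> b \<in> H"
    and val: "\<forall>x\<in>carrier G. x \<in> H \<or> inv\<^bsub>G\<^esub> x \<in> H"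
    and fin: "finite S"
  shows "S \<noteq> {} \<Longrightarrow> S \<subseteq> carrier G \<Longrightarrow> \<exists>m\<in>S. \<forall>x\<in>S. x \<otimes>\<^bsub>G\<^esub> inv\<^bsub>G\<^esub> m \<in> H"
  using fin
proof (induction S rule: finite_induct)
  case empty
  then show ?case by simp
next
  case (insert y S)
  interpret comm_group G by (rule cg)
  have y: "y \<in> carrier G" using insert by auto
  show ?case
  proof (cases "S = {}")
    case True
    then show ?thesis using y one by auto
  next
    case False
    then obtain m where m: "m \<in> S" "\<forall>x\<in>S. x \<otimes>\<^bsub>G\<^esub> inv\<^bsub>G\<^esub> m \<in> H" using insert by auto
    have mc: "m \<in> carrier G" using m insert by auto
    show ?thesis
    proof (cases "y \<otimes>\<^bsub>G\<^esub> inv\<^bsub>G\<^esub> m \<in> H")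
      case True
      then show ?thesis using m by auto
    next
      case F: False
      have "inv\<^bsub>G\<^esub> (y \<otimes>\<^bsub>G\<^esub> inv\<^bsub>G\<^esub> m) \<in> H" using val F y mc by auto
      moreover have "inv\<^bsub>G\<^esub> (y \<otimes>\<^bsub>G\<^esub> inv\<^bsub>G\<^esub> m) = m \<otimes>\<^bsub>G\<^esub> inv\<^bsub>G\<^esub> y" using y mc
        by (simp add: inv_mult_group m_comm)
      ultimately have my: "m \<otimes>\<^bsub>G\<^esub> inv\<^bsub>G\<^esub> y \<in> H" by simp
      have "\<forall>x\<in>insert y S. x \<otimes>\<^bsub>G\<^esub> inv\<^bsub>G\<^esub> y \<in> H"
      proof
        fix x assume x: "x \<in> insert y S"
        show "x \<otimes>\<^bsub>G\<^esub> inv\<^bsub>G\<^esub> y \<in> H"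
        proof (cases "x = y")
          case True then show ?thesis using y one by simp
        next
          case False
          then have xS: "x \<in> S" using x by auto
          have xc: "x \<in> carrier G" using xS insert by auto
          have "(x \<otimes>\<^bsub>G\<^esub> inv\<^bsub>G\<^esub> m) \<otimes>\<^bsub>G\<^esub> (m \<otimes>\<^bsub>G\<^esub> inv\<^bsub>G\<^esub> y) \<in> H" using cl m(2) xS my by auto
          moreover have "(x \<otimes>\<^bsub>G\<^esub> inv\<^bsub>G\<^esub> m) \<otimes>\<^bsub>G\<^esub> (m \<otimes>\<^bsub>G\<^esub> inv\<^bsub>G\<^esub> y) = x \<otimes>\<^bsub>G\<^esub> inv\<^bsub>G\<^esub> y"
            using xc mc y by (simp add: m_assoc[symmetric]) (simp add: m_assoc)
          ultimately show ?thesis by simp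
        qed
      qed
      then show ?thesis by auto
    qed
  qed
qed

theorem lemma1:
  fixes G :: "('a, 'b) monoid_scheme" and H :: "'a set" and X :: "'a set"
  assumes "submonoid_quotient_group G H"
    and "is_valuation_monoid G H"
    and "is_reduced G H"
    and "finite X" and "X \<subseteq> carrier G" and "\<one>\<^bsub>G\<^esub> \<in> X"
  shows "\<exists>!a. a \<in> carrier G \<and>
           finite ((\<lambda>x. a \<otimes>\<^bsub>G\<^esub> x) ` X) \<and>
           (\<lambda>x. a \<otimes>\<^bsub>G\<^esub> x) ` X \<subseteq> H \<and>
           \<one>\<^bsub>G\<^esub> \<in> (\<lambda>x. a \<otimes>\<^bsub>G\<^esub> x) ` X"
proof -
  have cg: "comm_group G" and HG: "H \<subseteq> carrier G" and one: "\<one>\<^bsub>G\<^esub> \<in> H"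
    and cl: "\<forall>a\<in>H. \<forall>b\<in>H. a \<otimes>\<^bsub>G\<^esub> b \<in> H"
    using assms(1) unfolding submonoid_quotient_group_def by auto
  have val: "\<forall>x\<in>carrier G. x \<in> H \<or> inv\<^bsub>G\<^esub> x \<in> H"
    using assms(2) unfolding is_valuation_monoid_def by auto
  have red: "\<forall>u\<in>H. (\<exists>v\<in>H. u \<otimes>\<^bsub>G\<^esub> v = \<one>\<^bsub>G\<^esub>) \<longrightarrow> u = \<one>\<^bsub>G\<^esub>"
    using assms(3) unfolding is_reduced_def by auto
  interpret comm_group G by (rule cg)
  obtain m where m: "m \<in> X" "\<forall>x\<in>X. x \<otimes>\<^bsub>G\<^esub> inv\<^bsub>G\<^esub> m \<in> H"
    using min_exists[OF cg HG one cl val assms(4)] assms(5,6) by blast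
  have mc: "m \<in> carrier G" using m assms(5) by auto
  show ?thesis
  proof (rule ex1I[where a="inv\<^bsub>G\<^esub> m"])
    have "(\<lambda>x. inv\<^bsub>G\<^esub> m \<otimes>\<^bsub>G\<^esub> x) ` X \<subseteq> H"
    proof
      fix z assume "z \<in> (\<lambda>x. inv\<^bsub>G\<^esub> m \<otimes>\<^bsub>G\<^esub> x) ` X"
      then obtain x where x: "x \<in> X" "z = inv\<^bsub>G\<^esub> m \<otimes>\<^bsub>G\<^esub> x" by auto
      have "x \<in> carrier G" using x assms(5) by auto
      then show "z \<in> H" using x m mc by (simp add: m_comm)
    qed
    moreover have "\<one>\<^bsub>G\<^esub> \<in> (\<lambda>x. inv\<^bsub>G\<^esub> m \<otimes>\<^bsub>G\<^esub> x) ` X" using m mc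
      by (intro image_eqI[where x=m]) auto
    ultimately show "inv\<^bsub>G\<^esub> m \<in> carrier G \<and> finite ((\<lambda>x. inv\<^bsub>G\<^esub> m \<otimes>\<^bsub>G\<^esub> x) ` X) \<and>
        (\<lambda>x. inv\<^bsub>G\<^esub> m \<otimes>\<^bsub>G\<^esub> x) ` X \<subseteq> H \<and> \<one>\<^bsub>G\<^esub> \<in> (\<lambda>x. inv\<^bsub>G\<^esub> m \<otimes>\<^bsub>G\<^esub> x) ` X"
      using mc assms(4) by auto
  next
    fix a assume a: "a \<in> carrier G \<and> finite ((\<lambda>x. a \<otimes>\<^bsub>G\<^esub> x) ` X) \<and>
        (\<lambda>x. a \<otimes>\<^bsub>G\<^esub> x) ` X \<subseteq> H \<and> \<one>\<^bsub>G\<^esub> \<in> (\<lambda>x. a \<otimes>\<^bsub>G\<^esub> x) ` X"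
    then obtain x0 where x0: "x0 \<in> X" "a \<otimes>\<^bsub>G\<^esub> x0 = \<one>\<^bsub>G\<^esub>" by auto
    have x0c: "x0 \<in> carrier G" using x0 assms(5) by auto
    have ainv: "a = inv\<^bsub>G\<^esub> x0" using a x0 x0c by (metis inv_equality)
    have h1: "m \<otimes>\<^bsub>G\<^esub> inv\<^bsub>G\<^esub> x0 \<in> H" using a ainv m(1) mc x0c by (auto simp: m_comm)
    have h2: "x0 \<otimes>\<^bsub>G\<^esub> inv\<^bsub>G\<^esub> m \<in> H" using m x0 by auto
    have "(m \<otimes>\<^bsub>G\<^esub> inv\<^bsub>G\<^esub> x0) \<otimes>\<^bsub>G\<^esub> (x0 \<otimes>\<^bsub>G\<^esub> inv\<^bsub>G\<^esub> m) = \<one>\<^bsub>G\<^esub>" using mc x0c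
      by (simp add: m_assoc[symmetric]) (simp add: m_assoc)
    then have "m \<otimes>\<^bsub>G\<^esub> inv\<^bsub>G\<^esub> x0 = \<one>\<^bsub>G\<^esub>" using red h1 h2 by blast
    then have "m = x0" using mc x0c by (metis inv_equality inv_inv inv_closed r_inv)
    then show "a = inv\<^bsub>G\<^esub> m" using ainv by simp
  qed
qed

end
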